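(* For every $M\ge \frac52$, every deterministic semi-online algorithm with migration factor $M$ for scheduling on two hierarchical machines with known optimal makespan (bin stretching) has competitive ratio at least $1+\frac{2}{2M+3}=\frac{2M+5}{2M+3}$.
   Context: Model (two hierarchical machines with migration, bin stretching). Jobs $1,2,\dots,n$ arrive one by one ($n$ unknown in advance). Job $j$ has a size $p_j>0$ and a grade of service (GoS) $g_j\in\{1,2\}$; a job of GoS $1$ may only be processed on machine $m_1$, a job of GoS $2$ may be processed on $m_1$ or on $m_2$. The load of a machine is the total size of the jobs assigned to it, and the makespan is the maximum load. When job $j$ arrives, the algorithm must assign it to a machine, and at the same time it may reassign (migrate) previously arrived jobs to other machines (respecting the GoS constraints), provided that the total size of the migrated jobs is at most $M\cdot p_j$; $M\ge 0$ is the migration factor. Bin stretching: the optimal offline makespan of the complete input is known in advance to the algorithm (and scaled to $1$). The competitive ratio of an algorithm is the supremum over inputs of (algorithm's makespan)/(optimal makespan). *)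

theory Defs
  imports Complex_Main
begin

text \<open>A job is a pair (size, GoS). Machines are numbered 1 and 2.
  An input is a finite list of jobs (released in list order).
  An assignment maps job indices (positions in the list) to machines.\<close>

type_synonym job = "real \<times> nat"
type_synonym assignment = "nat \<Rightarrow> nat"

definition valid_input :: "job list \<Rightarrow> bool" where
  "valid_input \<sigma> \<longleftrightarrow> (\<forall>j \<in> set \<sigma>. fst j > 0 \<and> snd j \<in> {1, 2})"

definition feasible :: "job list \<Rightarrow> assignment \<Rightarrow> bool" where
  "feasible \<sigma> a \<longleftrightarrow>
     (\<forall>i < length \<sigma>. a i \<in> {1, 2} \<and> (snd (\<sigma> ! i) = 1 \<longrightarrow> a i = 1))"

definition load :: "job list \<Rightarrow> assignment \<Rightarrow> nat \<Rightarrow> real" where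
  "load \<sigma> a k = (\<Sum>i \<in> {i. i < length \<sigma> \<and> a i = k}. fst (\<sigma> ! i))"

definition makespan :: "job list \<Rightarrow> assignment \<Rightarrow> real" where
  "makespan \<sigma> a = max (load \<sigma> a 1) (load \<sigma> a 2)"

definition opt :: "job list \<Rightarrow> real" where
  "opt \<sigma> = (INF a \<in> {a. feasible \<sigma> a}. makespan \<sigma> a)"

definition migrated :: "job list \<Rightarrow> assignment \<Rightarrow> assignment \<Rightarrow> real" where
  "migrated \<sigma> a b = (\<Sum>i \<in> {i. i < length \<sigma> \<and> a i \<noteq> b i}. fst (\<sigma> ! i))"

text \<open>A deterministic semi-online algorithm (bin stretching: the optimal makespan
  of the full input is known and scaled to 1) is a function ALG that maps the
  prefix of jobs seen so far to the current assignment of all these jobs.\<close>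
definition valid_alg :: "real \<Rightarrow> (job list \<Rightarrow> assignment) \<Rightarrow> bool" where
  "valid_alg M ALG \<longleftrightarrow>
     (\<forall>\<sigma>. valid_input \<sigma> \<and> opt \<sigma> = 1 \<longrightarrow>
        (\<forall>k. 1 \<le> k \<and> k \<le> length \<sigma> \<longrightarrow>
           feasible (take k \<sigma>) (ALG (take k \<sigma>)) \<and>
           migrated (take (k - 1) \<sigma>) (ALG (take (k - 1) \<sigma>)) (ALG (take k \<sigma>))
             \<le> M * fst (\<sigma> ! (k - 1))))"

definition comp_ratio_at_least :: "(job list \<Rightarrow> assignment) \<Rightarrow> real \<Rightarrow> bool" where
  "comp_ratio_at_least ALG c \<longleftrightarrow>
     (\<forall>r. (\<forall>\<sigma>. valid_input \<sigma> \<and> opt \<sigma> = 1 \<longrightarrow> makespan \<sigma> (ALG \<sigma>) \<le> r * opt \<sigma>) \<longrightarrow> c \<le> r)"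

end

theory Submission
  imports Defs
begin

lemma load_eq: "load \<sigma> a k = (\<Sum>i<length \<sigma>. if a i = k then fst (\<sigma>!i) else 0)"
proof -
  have eq: "{i. i < length \<sigma> \<and> a i = k} = {i\<in>{..<length \<sigma>}. a i = k}" by auto
  show ?thesis unfolding load_def eq by (rule sum.inter_filter) simp
qed

lemma no_move:
  assumes "migrated \<sigma> a b \<le> B" "B < fst (\<sigma>!i)" "i < length \<sigma>"
    "\<forall>j<length \<sigma>. 0 \<le> fst (\<sigma>!j)"
  shows "a i = b i"
proof (rule ccontr)
  assume ne: "a i \<noteq> b i"
  have "fst (\<sigma>!i) \<le> migrated \<sigma> a b" unfolding migrated_def
    by (rule member_le_sum) (use ne assms(3,4) in auto)
  with assms(1,2) show False by simp
qed

lemma opt_eq1: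
  assumes "feasible \<sigma> aa" "makespan \<sigma> aa = 1" "\<And>a. feasible \<sigma> a \<Longrightarrow> 1 \<le> makespan \<sigma> a"
  shows "opt \<sigma> = 1"
  unfolding opt_def using assms by (intro cInf_eq_minimum) auto

definition sig2 :: "real \<Rightarrow> job list" where
  "sig2 e = [(1-2*e,2),(1-e,2),(e/2,1),(e/2,1),(e/2,1),(e/2,1)]"
definition sig3 :: "real \<Rightarrow> job list" where
  "sig3 e = [(1-2*e,2),(1-e,2),(2*e,2),(e/2,1),(e/2,1)]"

lemma load2: "load (sig2 e) a k = (if a 0 = k then 1-2*e else 0) + (if a 1 = k then 1-e else 0)
   + (if a 2 = k then e/2 else 0) + (if a 3 = k then e/2 else 0) + (if a 4 = k then e/2 else 0)
   + (if a 5 = k then e/2 else 0)"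
  by (simp add: load_eq sig2_def numeral_eq_Suc lessThan_Suc)

lemma load3: "load (sig3 e) a k = (if a 0 = k then 1-2*e else 0) + (if a 1 = k then 1-e else 0)
   + (if a 2 = k then 2*e else 0) + (if a 3 = k then e/2 else 0) + (if a 4 = k then e/2 else 0)"
  by (simp add: load_eq sig3_def numeral_eq_Suc lessThan_Suc)

lemma all6: "(\<forall>i<(6::nat). P i) \<longleftrightarrow> P 0 \<and> P 1 \<and> P 2 \<and> P 3 \<and> P 4 \<and> P 5"
proof
  assume "\<forall>i<(6::nat). P i" then show "P 0 \<and> P 1 \<and> P 2 \<and> P 3 \<and> P 4 \<and> P 5" by simp
next
  assume h: "P 0 \<and> P 1 \<and> P 2 \<and> P 3 \<and> P 4 \<and> P 5"
  show "\<forall>i<(6::nat). P i"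
  proof (intro allI impI)
    fix i :: nat assume "i < 6"
    then have "i = 0 \<or> i = 1 \<or> i = 2 \<or> i = 3 \<or> i = 4 \<or> i = 5" by linarith
    then show "P i" using h by auto
  qed
qed
lemma all5: "(\<forall>i<(5::nat). P i) \<longleftrightarrow> P 0 \<and> P 1 \<and> P 2 \<and> P 3 \<and> P 4"
proof
  assume "\<forall>i<(5::nat). P i" then show "P 0 \<and> P 1 \<and> P 2 \<and> P 3 \<and> P 4" by simp
next
  assume h: "P 0 \<and> P 1 \<and> P 2 \<and> P 3 \<and> P 4"
  show "\<forall>i<(5::nat). P i"
  proof (intro allI impI)
    fix i :: nat assume "i < 5"
    then have "i = 0 \<or> i = 1 \<or> i = 2 \<or> i = 3 \<or> i = 4" by linarith
    then show "P i" using h by auto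
  qed
qed

lemma feas2: "feasible (sig2 e) a \<longleftrightarrow> a 0 \<in> {1,2} \<and> a 1 \<in> {1,2} \<and> a 2 = 1 \<and> a 3 = 1 \<and> a 4 = 1 \<and> a 5 = 1"
proof -
  have l: "length (sig2 e) = 6" by (simp add: sig2_def)
  show ?thesis unfolding feasible_def l all6 by (simp add: sig2_def) blast
qed

lemma feas3: "feasible (sig3 e) a \<longleftrightarrow> a 0 \<in> {1,2} \<and> a 1 \<in> {1,2} \<and> a 2 \<in> {1,2} \<and> a 3 = 1 \<and> a 4 = 1"
proof -
  have l: "length (sig3 e) = 5" by (simp add: sig3_def)
  show ?thesis unfolding feasible_def l all5 by (simp add: sig3_def) blast
qed

lemma opt2: assumes "0 < e" "e \<le> 1/4" shows "opt (sig2 e) = 1"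
proof (rule opt_eq1[where aa="\<lambda>i. if i = 1 then 2 else 1"])
  show "feasible (sig2 e) (\<lambda>i. if i = 1 then 2 else 1)" by (simp add: feas2)
  show "makespan (sig2 e) (\<lambda>i. if i = 1 then 2 else 1) = 1" using assms
    by (simp add: makespan_def load2)
  fix a assume "feasible (sig2 e) a"
  then have h: "a 2 = 1" "a 3 = 1" "a 4 = 1" "a 5 = 1" "a 0 = 1 \<or> a 0 = 2" "a 1 = 1 \<or> a 1 = 2"
    by (auto simp: feas2)
  from h(5,6) show "1 \<le> makespan (sig2 e) a" using assms
    by (elim disjE) (simp_all add: h(1-4) makespan_def load2 le_max_iff_disj)
qed

lemma opt3: assumes "0 < e" "e \<le> 1/4" shows "opt (sig3 e) = 1"
proof (rule opt_eq1[where aa="\<lambda>i. if i = 1 \<or> i \<ge> 3 then 1 else 2"])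
  show "feasible (sig3 e) (\<lambda>i. if i = 1 \<or> i \<ge> 3 then 1 else 2)" by (simp add: feas3)
  show "makespan (sig3 e) (\<lambda>i. if i = 1 \<or> i \<ge> 3 then 1 else 2) = 1" using assms
    by (simp add: makespan_def load3)
  fix a assume "feasible (sig3 e) a"
  then have h: "a 3 = 1" "a 4 = 1" "a 0 = 1 \<or> a 0 = 2" "a 1 = 1 \<or> a 1 = 2" "a 2 = 1 \<or> a 2 = 2"
    by (auto simp: feas3)
  from h(3,4,5) show "1 \<le> makespan (sig3 e) a" using assms
    by (elim disjE) (simp_all add: h(1,2) makespan_def load3 le_max_iff_disj)
qed

lemma vi2: "0 < e \<Longrightarrow> e < 1/2 \<Longrightarrow> valid_input (sig2 e)"
  by (simp add: valid_input_def sig2_def)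
lemma vi3: "0 < e \<Longrightarrow> e < 1/2 \<Longrightarrow> valid_input (sig3 e)"
  by (simp add: valid_input_def sig3_def)

lemma migrated_eq: "migrated \<sigma> a b = (\<Sum>i<length \<sigma>. if a i \<noteq> b i then fst (\<sigma>!i) else 0)"
proof -
  have eq: "{i. i < length \<sigma> \<and> a i \<noteq> b i} = {i\<in>{..<length \<sigma>}. a i \<noteq> b i}" by auto
  show ?thesis unfolding migrated_def eq by (rule sum.inter_filter) simp
qed

lemma keep01:
  assumes "migrated \<tau> a b \<le> M * (e/2)" "2 \<le> length \<tau>" "\<tau>!0 = (1-2*e,2)" "\<tau>!1 = (1-e,2)"
    "\<forall>x\<in>set \<tau>. 0 \<le> fst x" "0<e" "e \<le> 1/4" "M * e < 1 - 3*e/2"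
  shows "a 0 = b 0 \<and> a 1 = b 1"
proof -
  have nn: "\<forall>j<length \<tau>. 0 \<le> fst (\<tau>!j)" using assms(5) by (simp add: all_set_conv_all_nth)
  have h0: "M * (e/2) < fst (\<tau>!0)" and h1: "M * (e/2) < fst (\<tau>!1)" using assms(3,4,6,7,8) by auto
  have "a 0 = b 0" by (rule no_move[OF assms(1) h0 _ nn]) (use assms(2) in force)
  moreover have "a 1 = b 1" by (rule no_move[OF assms(1) h1 _ nn]) (use assms(2) in force)
  ultimately show ?thesis by simp
qed

lemma key:
  assumes V: "valid_alg M ALG" and e: "0 < e" "e \<le> 1/4" and me: "M * e < 1 - 3*e/2"
    and R: "\<forall>\<sigma>. valid_input \<sigma> \<and> opt \<sigma> = 1 \<longrightarrow> makespan \<sigma> (ALG \<sigma>) \<le> r * opt \<sigma>"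
  shows "1 + e \<le> r"
proof -
  define x where "x = ALG [(1-2*e,2),(1-e,2)]"
  show ?thesis
  proof (cases "x 0 = 1 \<and> x 1 = 2")
    case False
    let ?s = "sig2 e"
    have vi: "valid_input ?s" and o: "opt ?s = 1" using vi2 opt2 e by auto
    have VV: "\<And>k. 1 \<le> k \<Longrightarrow> k \<le> 6 \<Longrightarrow> feasible (take k ?s) (ALG (take k ?s)) \<and>
           migrated (take (k - 1) ?s) (ALG (take (k - 1) ?s)) (ALG (take k ?s)) \<le> M * fst (?s ! (k - 1))"
      using V vi o unfolding valid_alg_def by (auto simp: sig2_def)
    have st: "ALG (take (k-1) ?s) 0 = ALG (take k ?s) 0 \<and> ALG (take (k-1) ?s) 1 = ALG (take k ?s) 1"
      if "3 \<le> k" "k \<le> 6" for k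
    proof (rule keep01[where M=M and e=e])
      have eq: "fst (?s ! (k-1)) = e/2" using that by (auto simp: sig2_def nth_Cons' )
      have "migrated (take (k - 1) ?s) (ALG (take (k - 1) ?s)) (ALG (take k ?s)) \<le> M * fst (?s ! (k-1))"
        using VV[OF _ that(2)] that(1) by (meson dual_order.trans one_le_numeral)
      then show "migrated (take (k - 1) ?s) (ALG (take (k - 1) ?s)) (ALG (take k ?s)) \<le> M * (e / 2)"
        unfolding eq .
      show "2 \<le> length (take (k - 1) ?s)" using that by (simp add: sig2_def)
      show "take (k - 1) ?s ! 0 = (1 - 2 * e, 2)" using that by (simp add: sig2_def)
      show "take (k - 1) ?s ! 1 = (1 - e, 2)" using that by (simp add: sig2_def)
      have "\<forall>x\<in>set ?s. 0 \<le> fst x" using e by (simp add: sig2_def)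
      then show "\<forall>x\<in>set (take (k - 1) ?s). 0 \<le> fst x" by (meson in_set_takeD)
    qed (use e me in auto)
    have t2: "take 2 ?s = [(1-2*e,2),(1-e,2)]" by (simp add: sig2_def)
    have t6: "take 6 ?s = ?s" by (simp add: sig2_def)
    have f0: "ALG ?s 0 = x 0" and f1: "ALG ?s 1 = x 1"
      using st[of 3] st[of 4] st[of 5] st[of 6] t2 t6 by (simp_all add: x_def)
    have fe: "feasible ?s (ALG ?s)" using VV[of 6] t6 by simp
    then have h: "ALG ?s 2 = 1" "ALG ?s 3 = 1" "ALG ?s 4 = 1" "ALG ?s 5 = 1"
       "ALG ?s 0 = 1 \<or> ALG ?s 0 = 2" "ALG ?s 1 = 1 \<or> ALG ?s 1 = 2"
      by (auto simp: feas2)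
    have h56: "x 0 = 1 \<or> x 0 = 2" "x 1 = 1 \<or> x 1 = 2" using h(5,6) unfolding f0 f1 .
    have ms: "makespan ?s (ALG ?s) = max
       ((if x 0 = 1 then 1-2*e else 0) + (if x 1 = 1 then 1-e else 0) + e/2 + e/2 + e/2 + e/2)
       ((if x 0 = 2 then 1-2*e else 0) + (if x 1 = 2 then 1-e else 0))"
      unfolding makespan_def load2 f0 f1 h(1-4) by simp
    have "1 + e \<le> makespan ?s (ALG ?s)"
      unfolding ms using h56 False e by (elim disjE) (simp_all add: le_max_iff_disj)
    also have "\<dots> \<le> r" using R vi o by auto
    finally show ?thesis .
  next
    case True
    let ?s = "sig3 e"
    have vi: "valid_input ?s" and o: "opt ?s = 1" using vi3 opt3 e by auto
    have VV: "\<And>k. 1 \<le> k \<Longrightarrow> k \<le> 5 \<Longrightarrow> feasible (take k ?s) (ALG (take k ?s)) \<and>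
           migrated (take (k - 1) ?s) (ALG (take (k - 1) ?s)) (ALG (take k ?s)) \<le> M * fst (?s ! (k - 1))"
      using V vi o unfolding valid_alg_def by (auto simp: sig3_def)
    have st: "ALG (take (k-1) ?s) 0 = ALG (take k ?s) 0 \<and> ALG (take (k-1) ?s) 1 = ALG (take k ?s) 1"
      if "4 \<le> k" "k \<le> 5" for k
    proof (rule keep01[where M=M and e=e])
      have eq: "fst (?s ! (k-1)) = e/2" using that by (auto simp: sig3_def nth_Cons' )
      have "migrated (take (k - 1) ?s) (ALG (take (k - 1) ?s)) (ALG (take k ?s)) \<le> M * fst (?s ! (k-1))"
        using VV[OF _ that(2)] that(1) by (meson dual_order.trans one_le_numeral)
      then show "migrated (take (k - 1) ?s) (ALG (take (k - 1) ?s)) (ALG (take k ?s)) \<le> M * (e / 2)"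
        unfolding eq .
      show "2 \<le> length (take (k - 1) ?s)" using that by (simp add: sig3_def)
      show "take (k - 1) ?s ! 0 = (1 - 2 * e, 2)" using that by (simp add: sig3_def)
      show "take (k - 1) ?s ! 1 = (1 - e, 2)" using that by (simp add: sig3_def)
      have "\<forall>x\<in>set ?s. 0 \<le> fst x" using e by (simp add: sig3_def)
      then show "\<forall>x\<in>set (take (k - 1) ?s). 0 \<le> fst x" by (meson in_set_takeD)
    qed (use e me in auto)
    have t2: "take 2 ?s = [(1-2*e,2),(1-e,2)]" by (simp add: sig3_def)
    have t3: "take 3 ?s = [(1-2*e,2),(1-e,2),(2*e,2)]" by (simp add: sig3_def)
    have t5: "take 5 ?s = ?s" by (simp add: sig3_def)
    define y where "y = ALG (take 3 ?s)"
    have f0: "ALG ?s 0 = y 0" and f1: "ALG ?s 1 = y 1"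
      using st[of 4] st[of 5] t5 by (simp_all add: y_def)
    have m3: "migrated (take 2 ?s) x y \<le> M * (2*e)"
      using VV[of 3] t2 by (simp add: y_def x_def sig3_def)
    have ny: "\<not> (y 0 = 2 \<and> y 1 = 1)"
    proof
      assume "y 0 = 2 \<and> y 1 = 1"
      moreover have "migrated (take 2 ?s) x y = (if x 0 \<noteq> y 0 then 1-2*e else 0) + (if x 1 \<noteq> y 1 then 1-e else 0)"
        unfolding t2 migrated_eq by (simp add: lessThan_Suc)
      ultimately have "migrated (take 2 ?s) x y = (1-2*e) + (1-e)"
        using True by simp
      with m3 e me show False by (simp add: algebra_simps)
    qed
    have fe: "feasible ?s (ALG ?s)" using VV[of 5] t5 by simp
    then have h: "ALG ?s 3 = 1" "ALG ?s 4 = 1"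
       "ALG ?s 0 = 1 \<or> ALG ?s 0 = 2" "ALG ?s 1 = 1 \<or> ALG ?s 1 = 2" "ALG ?s 2 = 1 \<or> ALG ?s 2 = 2"
      by (auto simp: feas3)
    have h34: "y 0 = 1 \<or> y 0 = 2" "y 1 = 1 \<or> y 1 = 2" using h(3,4) unfolding f0 f1 .
    have ms: "makespan ?s (ALG ?s) = max
       ((if y 0 = 1 then 1-2*e else 0) + (if y 1 = 1 then 1-e else 0) + (if ALG ?s 2 = 1 then 2*e else 0) + e/2 + e/2)
       ((if y 0 = 2 then 1-2*e else 0) + (if y 1 = 2 then 1-e else 0) + (if ALG ?s 2 = 2 then 2*e else 0))"
      unfolding makespan_def load3 f0 f1 h(1,2) by simp
    have "1 + e \<le> makespan ?s (ALG ?s)"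
      unfolding ms using h34 h(5) ny e by (elim disjE) (simp_all add: le_max_iff_disj)
    also have "\<dots> \<le> r" using R vi o by auto
    finally show ?thesis .
  qed
qed

theorem mainTheorem4:
  fixes M :: real and ALG :: "job list \<Rightarrow> assignment"
  assumes "M \<ge> 5 / 2"
    and "valid_alg M ALG"
  shows "comp_ratio_at_least ALG ((2 * M + 5) / (2 * M + 3))"
  unfolding comp_ratio_at_least_def
proof (intro allI impI)
  fix r assume R: "\<forall>\<sigma>. valid_input \<sigma> \<and> opt \<sigma> = 1 \<longrightarrow> makespan \<sigma> (ALG \<sigma>) \<le> r * opt \<sigma>"
  define \<epsilon> where "\<epsilon> = 2 / (2*M+3)"
  have pos: "2*M+3 > 0" using assms(1) by simp
  have c: "(2 * M + 5) / (2 * M + 3) = 1 + \<epsilon>" unfolding \<epsilon>_def using pos by (simp add: field_simps)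
  have ep: "0 < \<epsilon>" "\<epsilon> \<le> 1/4" unfolding \<epsilon>_def using pos assms(1) by (simp_all add: field_simps)
  show "(2 * M + 5) / (2 * M + 3) \<le> r"
  proof (rule ccontr)
    assume "\<not> ?thesis"
    then have rl: "r < 1 + \<epsilon>" using c by simp
    define e where "e = (max (r - 1) 0 + \<epsilon>) / 2"
    have e1: "0 < e" "e < \<epsilon>" "r - 1 < e" using rl ep unfolding e_def by auto
    have "(2*M+3) * e < (2*M+3) * \<epsilon>" using e1 pos by simp
    also have "\<dots> = 2" unfolding \<epsilon>_def using pos by (simp add: field_simps)
    finally have "M * e < 1 - 3*e/2" by (simp add: algebra_simps)
    then have "1 + e \<le> r" using key[OF assms(2) e1(1) _ _ R] e1 ep by simp
    with e1 show False by simp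
  qed
qed

end
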